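(* Let $\alpha,\gamma,\mu,\delta,\rho>0$ and consider, for a parameter $b>0$, the system \[ \dot P=P\big[(b-\mu)-2bP+(\delta-b)A\big],\qquad \dot A=-(2\delta P+\rho)A \] on $\mathcal F=\{(P,A): P\ge0,\ A\ge0,\ 2P+A\le1\}$, with centrist share $C=1-2P-A$. Suppose that before time $t_0$ the parameter is $b=\beta_0$ with $\beta_0<\mu$, and let $(P(t_0^-),A(t_0^-))\in\mathcal F$ be the state at $t_0$. A structural shock $(\Delta,\Delta\beta)$ with $\Delta\in[0,1]$ at $t_0$ sets $P(t_0^+)=P(t_0^-)$, $C(t_0^+)=(1-\Delta)C(t_0^-)$, $A(t_0^+)=A(t_0^-)+\Delta C(t_0^-)$, and for $t>t_0$ the system evolves with parameter $b=\beta':=\beta_0+\Delta\beta>0$. If $P(t_0^-)>0$, then $\lim_{t\to\infty}C(t)<1$ (a permanent shift of the long-run equilibrium) if and only if $\beta_0+\Delta\beta>\mu$; in that case \[ \lim_{t\to\infty}C(t)=C^\infty=\frac{\mu}{\beta_0+\Delta\beta}<1, \] which does not depend on $\Delta$ (and if $\beta_0+\Delta\beta\le\mu$ then $C(t)\to1$). If $P(t_0^-)=0$, then $P(t)\equiv0$ for all $t>t_0$ regardless of $\Delta\beta$, and $(P(t),A(t))\to(0,0)$.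
   Context: This is the symmetric reduction ($L=R=P$) of a four-group voter model (left-radical, right-radical, centrist, disengaged) with $b=\alpha+\gamma$ the combined recruitment/reactive-polarisation rate, $\mu$ deradicalisation rate, $\delta$ mobilisation rate of disengaged voters, $\rho$ re-engagement rate. *)

theory Defs
  imports Complex_Main
begin

definition feasible :: "real \<Rightarrow> real \<Rightarrow> bool" where
  "feasible p a \<longleftrightarrow> 0 \<le> p \<and> 0 \<le> a \<and> 2 * p + a \<le> 1"

definition centrist :: "real \<Rightarrow> real \<Rightarrow> real" where
  "centrist p a = 1 - 2 * p - a"

end

theory Submission imports Defs "HOL-Analysis.Analysis" "HOL-Real_Asymp.Real_Asymp" begin

lemma barrier_up:
  fixes f f' :: "real \<Rightarrow> real"
  assumes lam: "0 < l" and d: "\<And>t. s \<le> t \<Longrightarrow> (f has_real_derivative f' t) (at t)"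
    and le: "\<And>t. s \<le> t \<Longrightarrow> f' t \<le> - l * (f t - Y)" and sig: "0 < \<sigma>"
  shows "eventually (\<lambda>t. f t \<le> Y + \<sigma>) at_top"
proof -
  have mono: "f t - Y \<le> (f s - Y) * exp (l * (s - t))" if t: "s \<le> t" for t
  proof -
    have "(\<lambda>t. (f t - Y) * exp (l * t)) t \<le> (\<lambda>t. (f t - Y) * exp (l * t)) s"
    proof (rule DERIV_nonpos_imp_decreasing_open[OF t])
      fix x assume x: "s < x" "x < t"
      have "((\<lambda>t. (f t - Y) * exp (l * t)) has_real_derivative
          f' x * exp (l * x) + (f x - Y) * (exp (l * x) * l)) (at x)"
        using x by (auto intro!: derivative_eq_intros d)
      moreover have "f' x * exp (l * x) + (f x - Y) * (exp (l * x) * l) = exp (l * x) * (f' x + l * (f x - Y))"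
        by (simp add: algebra_simps)
      moreover have "exp (l * x) * (f' x + l * (f x - Y)) \<le> 0"
        using le[of x] x by (intro mult_nonneg_nonpos) auto
      ultimately show "\<exists>y. ((\<lambda>t. (f t - Y) * exp (l * t)) has_real_derivative y) (at x) \<and> y \<le> 0"
        by metis
    next
      have "continuous_on {s..t} f"
        using d by (intro continuous_at_imp_continuous_on ballI DERIV_isCont[OF d]) auto
      then show "continuous_on {s..t} (\<lambda>t. (f t - Y) * exp (l * t))"
        by (intro continuous_intros)
    qed
    then have "(f t - Y) * exp (l * t) \<le> (f s - Y) * exp (l * s)" by simp
    then have "(f t - Y) * exp (l * t) * exp (- (l * t)) \<le> (f s - Y) * exp (l * s) * exp (- (l * t))"
      by (intro mult_right_mono) auto
    then show ?thesis by (simp add: mult.assoc exp_add[symmetric] algebra_simps)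
  qed
  have "((\<lambda>t. (f s - Y) * exp (l * (s - t))) \<longlongrightarrow> 0) at_top"
    using lam by real_asymp
  then have "eventually (\<lambda>t. (f s - Y) * exp (l * (s - t)) < \<sigma>) at_top"
    using sig by (rule order_tendstoD(2))
  moreover have "eventually (\<lambda>t. s \<le> t) at_top" by (rule eventually_ge_at_top)
  ultimately show ?thesis
    by eventually_elim (use mono in force)
qed

lemma barrier_lo:
  fixes f f' :: "real \<Rightarrow> real"
  assumes lam: "0 < l" and d: "\<And>t. s \<le> t \<Longrightarrow> (f has_real_derivative f' t) (at t)"
    and le: "\<And>t. s \<le> t \<Longrightarrow> f' t \<ge> - l * (f t - Y)" and sig: "0 < \<sigma>"
  shows "eventually (\<lambda>t. f t \<ge> Y - \<sigma>) at_top"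
proof -
  have "eventually (\<lambda>t. - f t \<le> - Y + \<sigma>) at_top"
  proof (rule barrier_up[OF lam _ _ sig])
    fix t assume "s \<le> t"
    show "((\<lambda>t. - f t) has_real_derivative - f' t) (at t)" using d[OF \<open>s \<le> t\<close>] by (rule DERIV_minus)
    show "- f' t \<le> - l * (- f t - - Y)" using le[OF \<open>s \<le> t\<close>] by (simp add: algebra_simps)
  qed
  then show ?thesis by eventually_elim simp
qed

lemma sign_lemma:
  fixes f h :: "real \<Rightarrow> real"
  assumes cf: "continuous_on {t0..} f" and ch: "continuous_on {t0..} h"
    and d: "\<And>t. t0 < t \<Longrightarrow> (f has_real_derivative f t * h t) (at t)"
  shows "(f t0 = 0 \<longrightarrow> (\<forall>t\<ge>t0. f t = 0)) \<and> (f t0 > 0 \<longrightarrow> (\<forall>t\<ge>t0. f t > 0))"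
proof -
  have key: "(f t0 = 0 \<longrightarrow> f T = 0) \<and> (f t0 > 0 \<longrightarrow> f T \<noteq> 0)" if T: "t0 \<le> T" for T
  proof -
    have "compact (h ` {t0..T})"
      by (rule compact_continuous_image[OF continuous_on_subset[OF ch]]) auto
    then obtain M where M: "\<And>x. x \<in> {t0..T} \<Longrightarrow> \<bar>h x\<bar> \<le> M"
      using compact_imp_bounded bounded_real by (metis image_eqI)
    have cfT: "continuous_on {t0..T} f" using continuous_on_subset[OF cf] by auto
    have A: "f t0 = 0 \<longrightarrow> f T = 0"
    proof
      assume f0: "f t0 = 0"
      have "(\<lambda>t. f t ^ 2 * exp (- (2 * M) * t)) T \<le> (\<lambda>t. f t ^ 2 * exp (- (2 * M) * t)) t0"
      proof (rule DERIV_nonpos_imp_decreasing_open[OF T])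
        fix x assume x: "t0 < x" "x < T"
        have "((\<lambda>t. f t ^ 2 * exp (- (2 * M) * t)) has_real_derivative
            (2 * f x * (f x * h x)) * exp (- (2 * M) * x) + f x ^ 2 * (exp (- (2 * M) * x) * (- (2 * M)))) (at x)"
          by (auto intro!: derivative_eq_intros d x)
        moreover have "(2 * f x * (f x * h x)) * exp (- (2 * M) * x) + f x ^ 2 * (exp (- (2 * M) * x) * (- (2 * M)))
             = 2 * f x ^ 2 * exp (- (2 * M) * x) * (h x - M)"
          by (simp add: algebra_simps power2_eq_square)
        moreover have "2 * f x ^ 2 * exp (- (2 * M) * x) * (h x - M) \<le> 0"
          using M[of x] x by (intro mult_nonneg_nonpos) auto
        ultimately show "\<exists>y. ((\<lambda>t. f t ^ 2 * exp (- (2 * M) * t)) has_real_derivative y) (at x) \<and> y \<le> 0"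
          by metis
      next
        show "continuous_on {t0..T} (\<lambda>t. f t ^ 2 * exp (- (2 * M) * t))"
          by (intro continuous_intros cfT)
      qed
      then have "f T ^ 2 * exp (- (2 * M) * T) \<le> 0" using f0 by simp
      then have "f T ^ 2 \<le> 0" by (simp add: mult_le_0_iff)
      then show "f T = 0" by simp
    qed
    have B: "f t0 > 0 \<longrightarrow> f T \<noteq> 0"
    proof
      assume f0: "f t0 > 0"
      have "(\<lambda>t. f t ^ 2 * exp ((2 * M) * t)) t0 \<le> (\<lambda>t. f t ^ 2 * exp ((2 * M) * t)) T"
      proof (rule DERIV_nonneg_imp_increasing_open[OF T])
        fix x assume x: "t0 < x" "x < T"
        have "((\<lambda>t. f t ^ 2 * exp ((2 * M) * t)) has_real_derivative
            (2 * f x * (f x * h x)) * exp ((2 * M) * x) + f x ^ 2 * (exp ((2 * M) * x) * ((2 * M)))) (at x)"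
          by (auto intro!: derivative_eq_intros d x)
        moreover have "(2 * f x * (f x * h x)) * exp ((2 * M) * x) + f x ^ 2 * (exp ((2 * M) * x) * ((2 * M)))
             = 2 * f x ^ 2 * exp ((2 * M) * x) * (h x + M)"
          by (simp add: algebra_simps power2_eq_square)
        moreover have "2 * f x ^ 2 * exp ((2 * M) * x) * (h x + M) \<ge> 0"
          using M[of x] x by (intro mult_nonneg_nonneg) auto
        ultimately show "\<exists>y. ((\<lambda>t. f t ^ 2 * exp ((2 * M) * t)) has_real_derivative y) (at x) \<and> y \<ge> 0"
          by metis
      next
        show "continuous_on {t0..T} (\<lambda>t. f t ^ 2 * exp ((2 * M) * t))"
          by (intro continuous_intros cfT)
      qed
      moreover have "0 < f t0 ^ 2 * exp ((2 * M) * t0)" using f0 by simp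
      ultimately show "f T \<noteq> 0" by auto
    qed
    show ?thesis using A B by blast
  qed
  show ?thesis
  proof (intro conjI impI allI)
    fix t assume "f t0 = 0" "t0 \<le> t" then show "f t = 0" using key by blast
  next
    fix t assume f0: "f t0 > 0" and t: "t0 \<le> t"
    show "f t > 0"
    proof (rule ccontr)
      assume "\<not> f t > 0"
      then obtain x where "t0 \<le> x" "x \<le> t" "f x = 0"
        using IVT2'[of f t 0 t0] f0 t continuous_on_subset[OF cf, of "{t0..t}"] by auto
      then show False using key[of x] f0 by auto
    qed
  qed
qed


theorem theorem7p1:
  fixes \<mu> \<delta> \<rho> \<beta>0 \<Delta>\<beta> \<Delta> t0 P0 A0 :: real
    and P A :: "real \<Rightarrow> real"
  assumes params: "0 < \<mu>" "0 < \<delta>" "0 < \<rho>" "0 < \<beta>0"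
    and pre: "\<beta>0 < \<mu>"
    and post_pos: "0 < \<beta>0 + \<Delta>\<beta>"
    and shock: "0 \<le> \<Delta>" "\<Delta> \<le> 1"
    and state: "feasible P0 A0"
    and initP: "P t0 = P0"
    and initA: "A t0 = A0 + \<Delta> * centrist P0 A0"
    and odeP: "\<And>t. t0 \<le> t \<Longrightarrow> (P has_real_derivative
        P t * ((\<beta>0 + \<Delta>\<beta> - \<mu>) - 2 * (\<beta>0 + \<Delta>\<beta>) * P t
               + (\<delta> - (\<beta>0 + \<Delta>\<beta>)) * A t)) (at t within {t0..})"
    and odeA: "\<And>t. t0 \<le> t \<Longrightarrow> (A has_real_derivative
        - (2 * \<delta> * P t + \<rho>) * A t) (at t within {t0..})"
  shows "(0 < P0 \<longrightarrow>
            ((\<exists>L. ((\<lambda>t. centrist (P t) (A t)) \<longlongrightarrow> L) at_top \<and> L < 1)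
               \<longleftrightarrow> \<beta>0 + \<Delta>\<beta> > \<mu>)
          \<and> (\<beta>0 + \<Delta>\<beta> > \<mu> \<longrightarrow>
               ((\<lambda>t. centrist (P t) (A t)) \<longlongrightarrow> \<mu> / (\<beta>0 + \<Delta>\<beta>)) at_top
               \<and> \<mu> / (\<beta>0 + \<Delta>\<beta>) < 1)
          \<and> (\<beta>0 + \<Delta>\<beta> \<le> \<mu> \<longrightarrow>
               ((\<lambda>t. centrist (P t) (A t)) \<longlongrightarrow> 1) at_top))
       \<and> (P0 = 0 \<longrightarrow>
            (\<forall>t>t0. P t = 0) \<and> (P \<longlongrightarrow> 0) at_top \<and> (A \<longlongrightarrow> 0) at_top)"
proof -
  define b where "b = \<beta>0 + \<Delta>\<beta>"
  define k where "k = b - \<mu>"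
  define c where "c = \<delta> - b"
  define hP where "hP = (\<lambda>t. k - 2 * b * P t + c * A t)"
  define hA where "hA = (\<lambda>t. - (2 * \<delta> * P t + \<rho>))"
  have bpos: "0 < b" using post_pos b_def by simp
  have dPw: "(P has_real_derivative P t * hP t) (at t within {t0..})" if "t0 \<le> t" for t
    using odeP[OF that] unfolding hP_def k_def c_def b_def .
  have dAw: "(A has_real_derivative A t * hA t) (at t within {t0..})" if "t0 \<le> t" for t
    using odeA[OF that] unfolding hA_def by (simp add: mult.commute)
  have cP: "continuous_on {t0..} P"
    using dPw by (auto simp: continuous_on_eq_continuous_within intro: DERIV_continuous)
  have cA: "continuous_on {t0..} A"
    using dAw by (auto simp: continuous_on_eq_continuous_within intro: DERIV_continuous)
  have int: "at t within {t0..} = at t" if "t0 < t" for t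
    using that by (intro at_within_interior) simp
  have dP: "(P has_real_derivative P t * hP t) (at t)" if "t0 < t" for t
    using dPw[of t] int[OF that] that by simp
  have dA: "(A has_real_derivative A t * hA t) (at t)" if "t0 < t" for t
    using dAw[of t] int[OF that] that by simp
  have chP: "continuous_on {t0..} hP" unfolding hP_def by (intro continuous_intros cP cA)
  have chA: "continuous_on {t0..} hA" unfolding hA_def by (intro continuous_intros cP cA)
  have P0nn: "0 \<le> P0" and A0nn: "0 \<le> A t0"
    using state shock initA by (auto simp: feasible_def centrist_def)
  note sP = sign_lemma[OF cP chP dP] and sA = sign_lemma[OF cA chA dA]
  have Pnn: "0 \<le> P t" if "t0 \<le> t" for t
    using sP initP P0nn that by (cases "P0 = 0") auto
  have Ann: "0 \<le> A t" if "t0 \<le> t" for t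
    using sA A0nn that by (cases "A t0 = 0") auto
  have Alim: "(A \<longlongrightarrow> 0) at_top"
  proof (rule order_tendstoI)
    fix a :: real assume a: "a < 0"
    have "eventually (\<lambda>t. t0 \<le> t) at_top" by (rule eventually_ge_at_top)
    then show "eventually (\<lambda>t. a < A t) at_top"
      by eventually_elim (use Ann a in force)
  next
    fix a :: real assume a: "0 < a"
    have "eventually (\<lambda>t. A t \<le> 0 + a / 2) at_top"
    proof (rule barrier_up[of \<rho> "t0 + 1" A "\<lambda>t. A t * hA t"])
      show "0 < \<rho>" by (rule params)
      show "0 < a / 2" using a by simp
    next
      fix t assume t: "t0 + 1 \<le> t"
      show "(A has_real_derivative A t * hA t) (at t)" using t by (intro dA) simp
      have "A t * hA t = - \<rho> * (A t - 0) - 2 * \<delta> * (P t * A t)"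
        unfolding hA_def by (simp add: algebra_simps)
      moreover have "0 \<le> 2 * \<delta> * (P t * A t)" using Pnn[of t] Ann[of t] t params by simp
      ultimately show "A t * hA t \<le> - \<rho> * (A t - 0)" by linarith
    qed
    then show "eventually (\<lambda>t. A t < a) at_top"
      by eventually_elim (use a in simp)
  qed
  have case0: "P0 = 0 \<longrightarrow> (\<forall>t>t0. P t = 0) \<and> (P \<longlongrightarrow> 0) at_top \<and> (A \<longlongrightarrow> 0) at_top"
  proof
    assume "P0 = 0"
    then have Z: "\<forall>t\<ge>t0. P t = 0" using sP initP by auto
    have "eventually (\<lambda>t. t0 \<le> t) at_top" by (rule eventually_ge_at_top)
    then have "eventually (\<lambda>t. P t = 0) at_top" by eventually_elim (use Z in auto)
    then have "(P \<longlongrightarrow> 0) at_top" by (rule tendsto_eventually)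
    then show "(\<forall>t>t0. P t = 0) \<and> (P \<longlongrightarrow> 0) at_top \<and> (A \<longlongrightarrow> 0) at_top" using Z Alim by auto
  qed
  have small: "\<exists>s. t0 < s \<and> (\<forall>t\<ge>s. \<bar>c * A t\<bar> \<le> \<eta>)" if eta: "0 < \<eta>" for \<eta>
  proof -
    have "((\<lambda>t. \<bar>c * A t\<bar>) \<longlongrightarrow> \<bar>c * 0\<bar>) at_top" by (intro tendsto_intros Alim)
    then have "eventually (\<lambda>t. \<bar>c * A t\<bar> < \<eta>) at_top" using eta by (intro order_tendstoD(2)) auto
    then obtain N where N: "\<And>t. N \<le> t \<Longrightarrow> \<bar>c * A t\<bar> < \<eta>" by (auto simp: eventually_at_top_linorder)
    show ?thesis by (rule exI[of _ "max N (t0 + 1)"]) (auto intro: less_imp_le N)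
  qed
  have casepos: "((\<lambda>t. centrist (P t) (A t)) \<longlongrightarrow> (if b > \<mu> then \<mu> / b else 1)) at_top" if P0pos: "0 < P0"
  proof -
    have Ppos: "0 < P t" if "t0 \<le> t" for t using sP initP P0pos that by auto
    define y where "y = (\<lambda>t. inverse (P t))"
    have ypos: "0 < y t" if "t0 \<le> t" for t using Ppos[OF that] by (simp add: y_def)
    have dy: "(y has_real_derivative 2 * b - (k + c * A t) * y t) (at t)" if t: "t0 < t" for t
      unfolding y_def
      by (rule DERIV_cong[OF DERIV_inverse_fun[OF dP[OF t]]])
         (use Ppos[of t] t in \<open>auto simp: hP_def field_simps power2_eq_square\<close>)
    have ev0: "eventually (\<lambda>t. t0 \<le> t) at_top" by (rule eventually_ge_at_top)
    have Pinv: "eventually (\<lambda>t. P t = inverse (y t)) at_top"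
      using ev0 by eventually_elim (simp add: y_def)
    show ?thesis
    proof (cases "b > \<mu>")
      case True
      then have kpos: "0 < k" by (simp add: k_def)
      have ylim: "(y \<longlongrightarrow> 2 * b / k) at_top"
      proof (rule order_tendstoI)
        fix a assume a: "a < 2 * b / k"
        have "((\<lambda>\<eta>. 2 * b / (k + \<eta>)) \<longlongrightarrow> 2 * b / (k + 0)) (at_right 0)"
          by (intro tendsto_intros) (use kpos in auto)
        then have "eventually (\<lambda>\<eta>. a < 2 * b / (k + \<eta>)) (at_right 0)"
          using a by (intro order_tendstoD(1)) auto
        then obtain e where e: "0 < e" "\<And>\<eta>. 0 < \<eta> \<Longrightarrow> \<eta> < e \<Longrightarrow> a < 2 * b / (k + \<eta>)"
          by (auto simp: eventually_at_right_field)
        define \<eta> where "\<eta> = e / 2"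
        have eta: "0 < \<eta>" "a < 2 * b / (k + \<eta>)" using e by (auto simp: \<eta>_def)
        obtain s where s: "t0 < s" "\<And>t. s \<le> t \<Longrightarrow> \<bar>c * A t\<bar> \<le> \<eta>" using small[OF eta(1)] by auto
        have "eventually (\<lambda>t. y t \<ge> 2 * b / (k + \<eta>) - (2 * b / (k + \<eta>) - a) / 2) at_top"
        proof (rule barrier_lo[of "k + \<eta>" s y "\<lambda>t. 2 * b - (k + c * A t) * y t"])
          show "0 < k + \<eta>" using kpos eta by simp
          show "0 < (2 * b / (k + \<eta>) - a) / 2" using eta by simp
        next
          fix t assume t: "s \<le> t"
          show "(y has_real_derivative 2 * b - (k + c * A t) * y t) (at t)" using t s by (intro dy) simp
          have "(k + c * A t) * y t \<le> (k + \<eta>) * y t"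
            using s(2)[OF t] ypos[of t] t s(1) by (intro mult_right_mono) auto
          moreover have "- (k + \<eta>) * (y t - 2 * b / (k + \<eta>)) = 2 * b - (k + \<eta>) * y t"
            using kpos eta by (simp add: field_simps)
          ultimately show "2 * b - (k + c * A t) * y t \<ge> - (k + \<eta>) * (y t - 2 * b / (k + \<eta>))"
            by linarith
        qed
        then show "eventually (\<lambda>t. a < y t) at_top"
          by (rule eventually_mono) (insert eta(2), argo)
      next
        fix a assume a: "a > 2 * b / k"
        have "((\<lambda>\<eta>. 2 * b / (k - \<eta>)) \<longlongrightarrow> 2 * b / (k - 0)) (at_right 0)"
          by (intro tendsto_intros) (use kpos in auto)
        then have "eventually (\<lambda>\<eta>. 2 * b / (k - \<eta>) < a) (at_right 0)"
          using a by (intro order_tendstoD(2)) auto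
        then obtain e where e: "0 < e" "\<And>\<eta>. 0 < \<eta> \<Longrightarrow> \<eta> < e \<Longrightarrow> 2 * b / (k - \<eta>) < a"
          by (auto simp: eventually_at_right_field)
        define \<eta> where "\<eta> = min (e / 2) (k / 2)"
        have eta: "0 < \<eta>" "\<eta> < k" "2 * b / (k - \<eta>) < a" using e kpos by (auto simp: \<eta>_def)
        obtain s where s: "t0 < s" "\<And>t. s \<le> t \<Longrightarrow> \<bar>c * A t\<bar> \<le> \<eta>" using small[OF eta(1)] by auto
        have "eventually (\<lambda>t. y t \<le> 2 * b / (k - \<eta>) + (a - 2 * b / (k - \<eta>)) / 2) at_top"
        proof (rule barrier_up[of "k - \<eta>" s y "\<lambda>t. 2 * b - (k + c * A t) * y t"])
          show "0 < k - \<eta>" using eta by simp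
          show "0 < (a - 2 * b / (k - \<eta>)) / 2" using eta by simp
        next
          fix t assume t: "s \<le> t"
          show "(y has_real_derivative 2 * b - (k + c * A t) * y t) (at t)" using t s by (intro dy) simp
          have "(k - \<eta>) * y t \<le> (k + c * A t) * y t"
            using s(2)[OF t] ypos[of t] t s(1) by (intro mult_right_mono) auto
          moreover have "- (k - \<eta>) * (y t - 2 * b / (k - \<eta>)) = 2 * b - (k - \<eta>) * y t"
            using eta by (simp add: field_simps)
          ultimately show "2 * b - (k + c * A t) * y t \<le> - (k - \<eta>) * (y t - 2 * b / (k - \<eta>))"
            by linarith
        qed
        then show "eventually (\<lambda>t. y t < a) at_top"
          by (rule eventually_mono) (insert eta(3), argo)
      qed
      have "((\<lambda>t. inverse (y t)) \<longlongrightarrow> inverse (2 * b / k)) at_top"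
        by (rule tendsto_inverse[OF ylim]) (use bpos kpos in simp)
      then have "(P \<longlongrightarrow> inverse (2 * b / k)) at_top"
        using tendsto_cong[OF Pinv] by blast
      then have "((\<lambda>t. 1 - 2 * P t - A t) \<longlongrightarrow> 1 - 2 * inverse (2 * b / k) - 0) at_top"
        by (intro tendsto_intros Alim)
      moreover have "1 - 2 * inverse (2 * b / k) - 0 = \<mu> / b"
        using bpos kpos by (simp add: k_def field_simps)
      ultimately show ?thesis using True by (simp add: centrist_def)
    next
      case False
      then have kneg: "k \<le> 0" by (simp add: k_def)
      have "filterlim y at_top at_top"
        unfolding filterlim_at_top
      proof
        fix Z :: real
        define \<eta> where "\<eta> = 2 * b / (\<bar>Z\<bar> + 1)"
        have eta: "0 < \<eta>" "2 * b / \<eta> = \<bar>Z\<bar> + 1" using bpos by (auto simp: \<eta>_def)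
        obtain s where s: "t0 < s" "\<And>t. s \<le> t \<Longrightarrow> \<bar>c * A t\<bar> \<le> \<eta>" using small[OF eta(1)] by auto
        have "eventually (\<lambda>t. y t \<ge> 2 * b / \<eta> - 1) at_top"
        proof (rule barrier_lo[of \<eta> s y "\<lambda>t. 2 * b - (k + c * A t) * y t"])
          show "0 < \<eta>" using eta by simp
          show "(0::real) < 1" by simp
        next
          fix t assume t: "s \<le> t"
          show "(y has_real_derivative 2 * b - (k + c * A t) * y t) (at t)" using t s by (intro dy) simp
          have "(k + c * A t) * y t \<le> \<eta> * y t"
            using s(2)[OF t] ypos[of t] t s(1) kneg by (intro mult_right_mono) auto
          moreover have "- \<eta> * (y t - 2 * b / \<eta>) = 2 * b - \<eta> * y t"
            using eta by (simp add: field_simps)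
          ultimately show "2 * b - (k + c * A t) * y t \<ge> - \<eta> * (y t - 2 * b / \<eta>)"
            by linarith
        qed
        then show "eventually (\<lambda>t. Z \<le> y t) at_top"
          by (rule eventually_mono) (insert eta(2), auto)
      qed
      then have "((\<lambda>t. inverse (y t)) \<longlongrightarrow> 0) at_top" by (rule tendsto_inverse_0_at_top)
      then have "(P \<longlongrightarrow> 0) at_top"
        using tendsto_cong[OF Pinv] by blast
      then have "((\<lambda>t. 1 - 2 * P t - A t) \<longlongrightarrow> 1 - 2 * 0 - 0) at_top"
        by (intro tendsto_intros Alim)
      then show ?thesis using False by (simp add: centrist_def)
    qed
  qed
  have mu1: "\<mu> / b < 1" if "b > \<mu>" using that bpos by simp
  show ?thesis
    unfolding b_def[symmetric]
  proof (intro conjI impI case0)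
    assume p: "0 < P0"
    note cp = casepos[OF p]
    show "(\<exists>L. ((\<lambda>t. centrist (P t) (A t)) \<longlongrightarrow> L) at_top \<and> L < 1) \<longleftrightarrow> \<mu> < b"
    proof
      assume "\<exists>L. ((\<lambda>t. centrist (P t) (A t)) \<longlongrightarrow> L) at_top \<and> L < 1"
      then obtain L where L: "((\<lambda>t. centrist (P t) (A t)) \<longlongrightarrow> L) at_top" "L < 1" by auto
      show "\<mu> < b"
      proof (rule ccontr)
        assume "\<not> \<mu> < b"
        then have "((\<lambda>t. centrist (P t) (A t)) \<longlongrightarrow> 1) at_top" using cp by simp
        then have "L = 1" using L(1) tendsto_unique[OF trivial_limit_at_top_linorder] by blast
        then show False using L(2) by simp
      qed
    next
      assume "\<mu> < b" then show "\<exists>L. ((\<lambda>t. centrist (P t) (A t)) \<longlongrightarrow> L) at_top \<and> L < 1"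
        using cp mu1 by auto
    qed
    show "\<mu> < b \<Longrightarrow> ((\<lambda>t. centrist (P t) (A t)) \<longlongrightarrow> \<mu> / b) at_top" using cp by simp
    show "\<mu> < b \<Longrightarrow> \<mu> / b < 1" by (rule mu1)
    show "b \<le> \<mu> \<Longrightarrow> ((\<lambda>t. centrist (P t) (A t)) \<longlongrightarrow> 1) at_top" using cp by simp
  qed (use case0 in auto)
qed

end
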